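(* Let $\bm S_0\in U(2N_0)$. Then $U_1=\{\bm M\in U(2N_0):\det(\bm S_0-\bm M)\ne0\}$ is path-connected. If $\bm S_0=\bm S_0^T$, then $U_2=\{\bm M\in U_1:\bm M=\bm M^T\}$ is path-connected. If $\bm S_0=\bm S_0^P$, then $U_3=\{\bm M\in U_1:\bm M=\bm M^P\}$ is path-connected. If $\bm S_0=\bm S_0^T=\bm S_0^P$, then $U_4=\{\bm M\in U_1:\bm M=\bm M^T=\bm M^P\}$ is path-connected.
   Context: $N_0\ge1$ integer; $U(n)$ the unitary group; $\bm M^T$ the transpose; $\bm M^P:=\bm R_{2N_0}\bm M\bm R_{2N_0}$ with $\bm R_{2N_0}=\begin{bmatrix}0&\bm I_{N_0}\\\bm I_{N_0}&0\end{bmatrix}$. *)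

theory Defs
  imports "HOL-Analysis.Analysis"
begin

text \<open>Matrices of size 2N0 x 2N0 are indexed by the type 'n + 'n, where 'n is an
arbitrary finite (nonempty) type with CARD('n) = N0 >= 1. Index Inl i is row/column i,
Inr i is row/column N0 + i.\<close>

definition conj_transpose :: "complex ^'m ^'m \<Rightarrow> complex ^'m ^'m" where
  "conj_transpose M = (\<chi> i j. cnj (M $ j $ i))"

definition unitary_group :: "(complex ^'m ^'m) set" where
  "unitary_group = {M. conj_transpose M ** M = mat 1 \<and> M ** conj_transpose M = mat 1}"

fun swap_half :: "'n + 'n \<Rightarrow> 'n + 'n" where
  "swap_half (Inl i) = Inr i"
| "swap_half (Inr i) = Inl i"

text \<open>R = [[0, I],[I, 0]]\<close>
definition R_mat :: "complex ^('n::finite + 'n) ^('n + 'n)" where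
  "R_mat = (\<chi> i j. if j = swap_half i then 1 else 0)"

definition P_conj :: "complex ^('n::finite + 'n) ^('n + 'n) \<Rightarrow> complex ^('n::finite + 'n) ^('n + 'n)" where
  "P_conj M = R_mat ** M ** R_mat"

end

theory Submission
  imports Defs
begin

lemma minv: assumes "invertible (A::'a::field^'n^'n)"
  shows "A ** matrix_inv A = mat 1" "matrix_inv A ** A = mat 1"
proof -
  have "\<exists>A'. A ** A' = mat 1 \<and> A' ** A = mat 1" using assms unfolding invertible_def by blast
  from someI_ex[OF this] show "A ** matrix_inv A = mat 1" "matrix_inv A ** A = mat 1"
    unfolding matrix_inv_def by auto
qed

lemma minv_unique: assumes "invertible (A::'a::field^'n^'n)" "B ** A = mat 1"
  shows "B = matrix_inv A"
proof -
  have "B = B ** (A ** matrix_inv A)" using minv[OF assms(1)] by simp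
  also have "\<dots> = matrix_inv A" by (simp add: matrix_mul_assoc assms(2))
  finally show ?thesis .
qed

lemma minv_invertible: assumes "invertible (A::'a::field^'n^'n)"
  shows "invertible (matrix_inv A)" "matrix_inv (matrix_inv A) = A"
proof -
  show "invertible (matrix_inv A)" using minv[OF assms] unfolding invertible_def by blast
  then show "matrix_inv (matrix_inv A) = A" using minv_unique minv[OF assms] by metis
qed

lemma ct_mult: "conj_transpose (A ** B) = conj_transpose B ** conj_transpose (A::complex^'n^'n)"
  by (simp add: conj_transpose_def matrix_matrix_mult_def vec_eq_iff mult.commute)
lemma ct_ct[simp]: "conj_transpose (conj_transpose A) = A"
  by (simp add: conj_transpose_def vec_eq_iff)
lemma ct_mat[simp]: "conj_transpose (mat 1) = mat 1"
  by (simp add: conj_transpose_def vec_eq_iff mat_def)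
lemma ct_add: "conj_transpose (A + B) = conj_transpose A + conj_transpose B"
  by (simp add: conj_transpose_def vec_eq_iff)
lemma ct_diff: "conj_transpose (A - B) = conj_transpose A - conj_transpose B"
  by (simp add: conj_transpose_def vec_eq_iff)
lemma ct_scaleR: "conj_transpose (c *\<^sub>R A) = c *\<^sub>R conj_transpose A"
  by (simp add: conj_transpose_def vec_eq_iff)

lemma mm_scaleR_r: "(A::complex^'n^'n) ** (c *\<^sub>R B) = c *\<^sub>R (A ** B)"
  by (simp add: matrix_matrix_mult_def vec_eq_iff scaleR_sum_right)
lemma mm_scaleR_l: "(c *\<^sub>R A::complex^'n^'n) ** B = c *\<^sub>R (A ** B)"
  by (simp add: matrix_matrix_mult_def vec_eq_iff scaleR_sum_right)
lemma mm_add_r: "((A::complex^'n^'n) + B) ** C = A ** C + B ** C"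
  by (simp add: matrix_matrix_mult_def vec_eq_iff sum.distrib algebra_simps)
lemma mm_diff_l: "(A::complex^'n^'n) ** (B - C) = A ** B - A ** C"
  by (simp add: matrix_matrix_mult_def vec_eq_iff sum_subtractf algebra_simps)
lemma mm_diff_r: "((A::complex^'n^'n) - B) ** C = A ** C - B ** C"
  by (simp add: matrix_matrix_mult_def vec_eq_iff sum_subtractf algebra_simps)

definition ip :: "complex^'n \<Rightarrow> complex^'n \<Rightarrow> complex" where
  "ip x y = (\<Sum>i\<in>UNIV. cnj (x$i) * y$i)"

lemma ip_adj: "ip x (A *v y) = ip (conj_transpose A *v x) y"
proof -
  have "ip x (A *v y) = (\<Sum>i\<in>UNIV. \<Sum>j\<in>UNIV. cnj (x$i) * A$i$j * y$j)"
    by (simp add: ip_def matrix_vector_mult_def sum_distrib_left mult.assoc)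
  also have "\<dots> = (\<Sum>j\<in>UNIV. \<Sum>i\<in>UNIV. cnj (x$i) * A$i$j * y$j)" by (rule sum.swap)
  also have "\<dots> = ip (conj_transpose A *v x) y"
    by (simp add: ip_def matrix_vector_mult_def conj_transpose_def sum_distrib_right sum_distrib_left mult_ac)
  finally show ?thesis .
qed

lemma ip_add: "ip x (a + b) = ip x a + ip x b"
  by (simp add: ip_def sum.distrib algebra_simps)
lemma ip_zero: "ip x 0 = 0" "ip 0 x = 0" by (simp_all add: ip_def)

lemma ip_self: assumes "ip x x = 0" shows "x = 0"
proof -
  have e: "ip x x = of_real (\<Sum>i\<in>UNIV. (norm (x$i))^2)"
    by (simp only: ip_def of_real_sum complex_norm_square mult.commute)
  have "(\<Sum>i\<in>UNIV. (norm (x$i))^2) = 0" using assms e of_real_eq_0_iff by metis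
  then have "\<forall>i\<in>UNIV. (norm (x$i))^2 = 0" by (subst (asm) sum_nonneg_eq_0_iff) auto
  then show ?thesis by (simp add: vec_eq_iff)
qed

lemma cont_det: "continuous_on S (\<lambda>A::complex^'n^'n. det A)"
  unfolding det_def by (intro continuous_intros)

lemma cont_det_comp: "continuous_on S f \<Longrightarrow> continuous_on S (\<lambda>x. det ((f x)::complex^'n^'n))"
  using continuous_on_compose2[OF cont_det[of UNIV] _ subset_UNIV] by blast

lemma minv_cramer: assumes "invertible (A::complex^'n^'n)"
  shows "matrix_inv A = (\<chi> k j. det (\<chi> i l. if l = k then (if i = j then 1 else 0) else A$i$l) / det A)"
proof -
  have d: "det A \<noteq> 0" using assms invertible_det_nz by blast
  have "matrix_inv A $ k $ j = det (\<chi> i l. if l = k then (if i = j then 1 else 0) else A$i$l) / det A" for k j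
  proof -
    let ?x = "(\<chi> k. matrix_inv A $ k $ j)"
    have "A *v ?x = (\<chi> i. (A ** matrix_inv A) $ i $ j)"
      by (simp add: matrix_vector_mult_def matrix_matrix_mult_def)
    also have "\<dots> = (\<chi> i. if i = j then 1 else 0)" using minv(1)[OF assms] by (simp add: mat_def)
    finally have "?x = (\<chi> k. det(\<chi> i l. if l=k then (\<chi> i. if i = j then (1::complex) else 0)$i else A$i$l) / det A)"
      using cramer[OF d] by blast
    then have "?x $ k = det(\<chi> i l. if l=k then (\<chi> i. if i = j then (1::complex) else 0)$i else A$i$l) / det A"
      by simp
    then show ?thesis by (simp cong: if_cong)
  qed
  then show ?thesis by (simp add: vec_eq_iff)
qed

lemma cont_if_entry: "continuous_on S (\<lambda>x. if P then c else (x::complex^'n^'n)$a$b)"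
proof (cases P)
  case True then show ?thesis by (simp add: continuous_on_const)
next
  case False
  have "continuous_on S (\<lambda>x::complex^'n^'n. x $ a $ b)"
    by (rule continuous_on_component[OF continuous_on_component[OF continuous_on_id]])
  then show ?thesis using False by simp
qed

lemma cont_minv: assumes "\<forall>A\<in>S. invertible (A::complex^'n^'n)"
  shows "continuous_on S matrix_inv"
proof -
  have c1: "continuous_on S (\<lambda>A::complex^'n^'n. det (\<chi> i l. if l = k then (if i = j then 1 else 0) else A$i$l))" for k j
    apply (rule cont_det_comp)
    apply (rule continuous_on_vec_lambda)
    apply (rule continuous_on_vec_lambda)
    apply (rule cont_if_entry)
    done
  have c2: "continuous_on S (\<lambda>A::complex^'n^'n. det A)" by (rule cont_det)
  have "continuous_on S (\<lambda>A::complex^'n^'n. (\<chi> k j. det (\<chi> i l. if l = k then (if i = j then 1 else 0) else A$i$l) / det A))"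
    apply (rule continuous_on_vec_lambda)
    apply (rule continuous_on_vec_lambda)
    apply (rule continuous_on_divide[OF c1 c2])
    using assms by (simp add: invertible_det_nz)
  then show ?thesis
    by (rule continuous_on_eq) (simp add: minv_cramer[symmetric] assms)
qed

lemma inv_assoc: "A ** B = mat 1 \<Longrightarrow> X ** A ** B = (X::complex^'n^'n)"
  by (metis matrix_mul_assoc matrix_mul_rid)

lemma alg1: fixes S G N :: "complex^'n^'n" assumes "G ** N = mat 1" "conj_transpose N ** conj_transpose G = mat 1"
  shows "conj_transpose N ** (S ** G + conj_transpose G ** conj_transpose S) ** N = conj_transpose N ** S + conj_transpose S ** N"
proof -
  have "conj_transpose N ** (S ** G + conj_transpose G ** conj_transpose S) ** N = conj_transpose N ** S ** (G ** N) + (conj_transpose N ** conj_transpose G) ** conj_transpose S ** N"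
    by (simp only: matrix_add_ldistrib mm_add_r matrix_mul_assoc)
  then show ?thesis using assms by simp
qed
lemma alg2: fixes S M :: "complex^'n^'n" assumes "conj_transpose S ** S = mat 1" "conj_transpose M ** M = mat 1"
  shows "conj_transpose (S - M) ** S + conj_transpose S ** (S - M) = conj_transpose (S - M) ** (S - M)"
  using assms by (simp add: ct_diff mm_diff_l mm_diff_r)
lemma alg3: fixes E G D :: "complex^'n^'n" assumes "G' ** D' = mat 1" "D ** G = mat 1"
  shows "G' ** (D' ** E ** D) ** G = E"
proof -
  have "G' ** (D' ** E ** D) ** G = (G' ** D') ** E ** (D ** G)" by (simp only: matrix_mul_assoc)
  then show ?thesis using assms by simp
qed
lemma alg4: fixes S N :: "complex^'n^'n" assumes "conj_transpose S ** S = mat 1"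
  "conj_transpose N ** S + conj_transpose S ** N = conj_transpose N ** N"
  shows "conj_transpose (S - N) ** (S - N) = mat 1"
proof -
  have "conj_transpose (S - N) ** (S - N) = conj_transpose S ** S - (conj_transpose N ** S + conj_transpose S ** N) + conj_transpose N ** N"
    by (simp add: ct_diff mm_diff_l mm_diff_r algebra_simps)
  then show ?thesis using assms by simp
qed


lemma gen:
  fixes S0 :: "complex^'m^'m" and Q :: "complex^'m^'m \<Rightarrow> bool"
  assumes S0: "S0 \<in> unitary_group"
    and cQ: "convex {G. Q G}"
    and Qd: "\<And>X. Q X \<Longrightarrow> Q (S0 - X)"
    and Qi: "\<And>X. Q X \<Longrightarrow> invertible X \<Longrightarrow> Q (matrix_inv X)"
  shows "path_connected {M \<in> unitary_group. det (S0 - M) \<noteq> 0 \<and> Q M}"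
proof -
  let ?ct = conj_transpose
  have u1: "?ct S0 ** S0 = mat 1" and u2: "S0 ** ?ct S0 = mat 1"
    using S0 unfolding unitary_group_def by auto
  define C where "C = {G. S0 ** G + ?ct G ** ?ct S0 = mat 1} \<inter> {G. Q G}"
  have "convex {G. S0 ** G + ?ct G ** ?ct S0 = mat 1}"
    unfolding convex_def
  proof (intro allI impI ballI)
    fix x y and u v :: real
    assume x: "x \<in> {G. S0 ** G + ?ct G ** ?ct S0 = mat 1}" and y: "y \<in> {G. S0 ** G + ?ct G ** ?ct S0 = mat 1}"
      and "0 \<le> u" "0 \<le> v" and uv: "u + v = 1"
    have "S0 ** (u *\<^sub>R x + v *\<^sub>R y) + ?ct (u *\<^sub>R x + v *\<^sub>R y) ** ?ct S0
       = u *\<^sub>R (S0 ** x + ?ct x ** ?ct S0) + v *\<^sub>R (S0 ** y + ?ct y ** ?ct S0)"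
      by (simp add: matrix_add_ldistrib mm_add_r mm_scaleR_r mm_scaleR_l ct_add ct_scaleR algebra_simps)
    also have "\<dots> = (u + v) *\<^sub>R mat 1" using x y by (simp add: scaleR_add_left)
    finally show "u *\<^sub>R x + v *\<^sub>R y \<in> {G. S0 ** G + ?ct G ** ?ct S0 = mat 1}" using uv by simp
  qed
  then have convC: "convex C" unfolding C_def using cQ by (rule convex_Int)
  have invC: "invertible G" if G: "G \<in> C" for G
  proof -
    have E: "S0 ** G + ?ct G ** ?ct S0 = mat 1" using G C_def by auto
    have "\<forall>x. G *v x = 0 \<longrightarrow> x = 0"
    proof (intro allI impI)
      fix x assume Gx: "G *v x = 0"
      have "x = (S0 ** G + ?ct G ** ?ct S0) *v x" using E by simp
      also have "\<dots> = ?ct G *v (?ct S0 *v x)"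
        by (simp add: matrix_vector_mult_add_rdistrib matrix_vector_mul_assoc[symmetric] Gx)
      finally have "ip x x = ip x (?ct G *v (?ct S0 *v x))" by simp
      also have "\<dots> = 0" by (simp add: ip_adj Gx ip_zero)
      finally show "x = 0" by (rule ip_self)
    qed
    then show ?thesis using invertible_left_inverse matrix_left_invertible_ker by blast
  qed
  have fC: "S0 - matrix_inv G \<in> unitary_group \<and> det (S0 - (S0 - matrix_inv G)) \<noteq> 0 \<and> Q (S0 - matrix_inv G)"
    if G: "G \<in> C" for G
  proof -
    define N where "N = matrix_inv G"
    have E: "S0 ** G + ?ct G ** ?ct S0 = mat 1" and QG: "Q G" using G C_def by auto
    have iG: "invertible G" using invC G .
    have GN: "G ** N = mat 1" and NG: "N ** G = mat 1" using minv[OF iG] N_def by auto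
    have cNG: "?ct N ** ?ct G = mat 1" using GN ct_mult[of G N] by simp
    have "?ct N ** (S0 ** G + ?ct G ** ?ct S0) ** N = ?ct N ** N" unfolding E by simp
    then have E2: "?ct N ** S0 + ?ct S0 ** N = ?ct N ** N" using alg1[OF GN cNG, of S0] by simp
    have U: "?ct (S0 - N) ** (S0 - N) = mat 1" using alg4[OF u1 E2] .
    then have "(S0 - N) ** ?ct (S0 - N) = mat 1" using matrix_left_right_inverse by blast
    with U have "S0 - N \<in> unitary_group" unfolding unitary_group_def by simp
    moreover have "det (S0 - (S0 - N)) \<noteq> 0" using minv_invertible(1)[OF iG] N_def by (simp add: invertible_det_nz)
    moreover have "Q (S0 - N)" using Qd Qi QG iG N_def by blast
    ultimately show ?thesis using N_def by simp
  qed
  have sC: "M \<in> (\<lambda>G. S0 - matrix_inv G) ` C"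
    if M: "M \<in> unitary_group" "det (S0 - M) \<noteq> 0" "Q M" for M
  proof -
    define D where "D = S0 - M"
    define G where "G = matrix_inv D"
    have iD: "invertible D" using M(2) invertible_det_nz D_def by blast
    have m1: "?ct M ** M = mat 1" using M(1) unfolding unitary_group_def by auto
    have GD: "G ** D = mat 1" and DG: "D ** G = mat 1" using minv[OF iD] G_def by auto
    have cGD: "?ct G ** ?ct D = mat 1" using DG ct_mult[of D G] by simp
    have cDG: "?ct D ** ?ct G = mat 1" using GD ct_mult[of G D] by simp
    let ?E = "S0 ** G + ?ct G ** ?ct S0"
    have "?ct D ** ?E ** D = ?ct D ** S0 + ?ct S0 ** D" using alg1[OF GD cDG] .
    also have "\<dots> = ?ct D ** D" unfolding D_def using alg2[OF u1 m1] .
    finally have e: "?ct D ** ?E ** D = ?ct D ** D" .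
    have "?E = ?ct G ** (?ct D ** ?E ** D) ** G" using alg3[OF cGD DG] by simp
    also have "\<dots> = mat 1" unfolding e using alg3[OF cGD DG, of "mat 1"] by simp
    finally have "?E = mat 1" .
    moreover have "Q G" unfolding G_def D_def using Qi Qd M(3) iD D_def by blast
    ultimately have "G \<in> C" unfolding C_def by simp
    moreover have "M = S0 - matrix_inv G" using minv_invertible(2)[OF iD] unfolding G_def D_def by simp
    ultimately show ?thesis by blast
  qed
  have eq: "{M \<in> unitary_group. det (S0 - M) \<noteq> 0 \<and> Q M} = (\<lambda>G. S0 - matrix_inv G) ` C"
    using fC sC by auto
  have "continuous_on C (\<lambda>G. S0 - matrix_inv G)"
    by (intro continuous_on_diff continuous_on_const cont_minv) (use invC in blast)
  then show ?thesis unfolding eq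
    using path_connected_continuous_image convex_imp_path_connected convC by blast
qed


lemma conv_fix:
  fixes L :: "complex^'m^'m \<Rightarrow> complex^'m^'m"
  assumes "\<And>A B. L (A + B) = L A + L B" "\<And>c A. L (c *\<^sub>R A) = c *\<^sub>R L A"
  shows "convex {G. G = L G}"
  unfolding convex_def using assms by auto

lemma swap_half_swap[simp]: "swap_half (swap_half x) = x"
  by (cases x) auto

lemma R_R: "(R_mat :: complex ^('n::finite + 'n) ^('n + 'n)) ** R_mat = mat 1"
proof -
  have "(R_mat ** R_mat :: complex ^('n::finite + 'n) ^('n + 'n)) $ i $ j = mat 1 $ i $ j" for i j
  proof -
    have "(R_mat ** R_mat :: complex ^('n::finite + 'n) ^('n + 'n)) $ i $ j
        = (\<Sum>k\<in>UNIV. (if k = swap_half i then 1 else 0) * (if j = swap_half k then 1 else 0))"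
      by (simp add: matrix_matrix_mult_def R_mat_def)
    also have "\<dots> = (\<Sum>k\<in>UNIV. if k = swap_half i then (if j = swap_half k then 1 else 0) else (0::complex))"
      by (rule sum.cong) auto
    also have "\<dots> = (if j = i then 1 else 0)" by (simp add: sum.delta')
    finally show ?thesis by (simp add: mat_def)
  qed
  then show ?thesis by (simp add: vec_eq_iff)
qed

lemma transpose_diff': "transpose (A - B) = transpose A - transpose (B::complex^'n^'n)"
  by (simp add: transpose_def vec_eq_iff)
lemma transpose_add': "transpose (A + B) = transpose A + transpose (B::complex^'n^'n)"
  by (simp add: transpose_def vec_eq_iff)

lemma Qt1: "convex {G::complex^'m^'m. G = transpose G}"
  by (rule conv_fix) (simp_all add: transpose_add' transpose_scalar)

lemma Qt2: "(S0::complex^'m^'m) = transpose S0 \<Longrightarrow> X = transpose X \<Longrightarrow> S0 - X = transpose (S0 - X)"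
  by (metis transpose_diff')

lemma Qt3: assumes X: "(X::complex^'m^'m) = transpose X" "invertible X"
  shows "matrix_inv X = transpose (matrix_inv X)"
proof -
  have "transpose (matrix_inv X) ** transpose X = mat 1"
    using minv(1)[OF X(2)] by (metis matrix_transpose_mul transpose_mat)
  then have "transpose (matrix_inv X) = matrix_inv X" using minv_unique[OF X(2)] X(1) by metis
  then show "matrix_inv X = transpose (matrix_inv X)" by simp
qed

lemma Qp1: "convex {G::complex ^('n::finite + 'n) ^('n + 'n). G = P_conj G}"
  by (rule conv_fix) (simp_all add: P_conj_def matrix_add_ldistrib mm_add_r mm_scaleR_r mm_scaleR_l)

lemma Qp2: "(S0::complex ^('n::finite + 'n) ^('n + 'n)) = P_conj S0 \<Longrightarrow> X = P_conj X \<Longrightarrow> S0 - X = P_conj (S0 - X)"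
  by (simp add: P_conj_def mm_diff_l mm_diff_r)

lemma Qp3: assumes X: "(X::complex ^('n::finite + 'n) ^('n + 'n)) = P_conj X" "invertible X"
  shows "matrix_inv X = P_conj (matrix_inv X)"
proof -
  have "(R_mat ** matrix_inv X ** R_mat) ** (R_mat ** X ** R_mat) = R_mat ** matrix_inv X ** (R_mat ** R_mat) ** X ** R_mat"
    by (simp only: matrix_mul_assoc)
  also have "\<dots> = R_mat ** (matrix_inv X ** X) ** R_mat" by (simp only: R_R matrix_mul_rid matrix_mul_assoc)
  also have "\<dots> = mat 1" by (simp add: minv(2)[OF X(2)] R_R)
  finally have "P_conj (matrix_inv X) ** X = mat 1" using X(1) unfolding P_conj_def by metis
  then show "matrix_inv X = P_conj (matrix_inv X)" using minv_unique[OF X(2)] by metis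
qed

theorem mainTheorem10:
  fixes S0 :: "complex ^('n::finite + 'n) ^('n + 'n)"
  assumes "S0 \<in> unitary_group"
  defines "U1 \<equiv> {M \<in> unitary_group. det (S0 - M) \<noteq> 0}"
  shows "path_connected U1
    \<and> (S0 = transpose S0 \<longrightarrow> path_connected {M \<in> U1. M = transpose M})
    \<and> (S0 = P_conj S0 \<longrightarrow> path_connected {M \<in> U1. M = P_conj M})
    \<and> (S0 = transpose S0 \<and> S0 = P_conj S0 \<longrightarrow>
           path_connected {M \<in> U1. M = transpose M \<and> M = P_conj M})"
proof (intro conjI impI)
  have "path_connected {M \<in> unitary_group. det (S0 - M) \<noteq> 0 \<and> True}"
    by (rule gen[OF assms(1)]) auto
  then show "path_connected U1" unfolding U1_def by simp
next
  assume T: "S0 = transpose S0"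
  have "path_connected {M \<in> unitary_group. det (S0 - M) \<noteq> 0 \<and> M = transpose M}"
    by (rule gen[OF assms(1)]) (use Qt1 Qt2[OF T] Qt3 in auto)
  then show "path_connected {M \<in> U1. M = transpose M}" unfolding U1_def
    by (simp add: conj_assoc)
next
  assume P: "S0 = P_conj S0"
  have "path_connected {M \<in> unitary_group. det (S0 - M) \<noteq> 0 \<and> M = P_conj M}"
    by (rule gen[OF assms(1)]) (use Qp1 Qp2[OF P] Qp3 in auto)
  then show "path_connected {M \<in> U1. M = P_conj M}" unfolding U1_def
    by (simp add: conj_assoc)
next
  assume TP: "S0 = transpose S0 \<and> S0 = P_conj S0"
  have c: "convex {G. G = transpose G \<and> G = P_conj G}"
    using convex_Int[OF Qt1 Qp1] by (simp add: Collect_conj_eq)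
  have "path_connected {M \<in> unitary_group. det (S0 - M) \<noteq> 0 \<and> (M = transpose M \<and> M = P_conj M)}"
    by (rule gen[OF assms(1) c]) (use Qt2 Qt3 Qp2 Qp3 TP in auto)
  then show "path_connected {M \<in> U1. M = transpose M \<and> M = P_conj M}" unfolding U1_def
    by (simp add: conj_assoc)
qed

end
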